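(* Let $A\in\mathbb{C}^{m\times n}$ with $\mathrm{rank}(A^{\sim}AA^{\sim})=\mathrm{rank}(A)$ (so that $A^{\mathfrak{m}}$ exists), and let $X\in\mathbb{C}^{n\times m}$. Then the following are equivalent: (1) $X=A^{\mathfrak{m}}$; (2) there exist $B\in\mathbb{C}^{m\times m}$ and $C\in\mathbb{C}^{n\times n}$ such that $AXA=A$, $X=A^{\sim}B$ and $X=CA^{\sim}$. Moreover, such $B$ and $C$ are given by $$B=(A^{\sim})^{(1)}A^{\mathfrak{m}}+(I_m-(A^{\sim})^{(1)}A^{\sim})Y,\qquad C=A^{\mathfrak{m}}(A^{\sim})^{(1)}+Z(I_n-A^{\sim}(A^{\sim})^{(1)}),$$ where $Y\in\mathbb{C}^{m\times m}$ and $Z\in\mathbb{C}^{n\times n}$ are arbitrary and $(A^{\sim})^{(1)}$ is a $\{1\}$-inverse of $A^{\sim}$.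
   Context: For a positive integer $k$, the Minkowski metric matrix of order $k$ is $G_k=\mathrm{diag}(1,-I_{k-1})$ (with $G_1=(1)$). For $A\in\mathbb{C}^{m\times n}$, the Minkowski adjoint is $A^{\sim}=G_nA^*G_m$, where $A^*$ is the conjugate transpose. The Minkowski inverse of $A$, denoted $A^{\mathfrak{m}}$, is the (unique) matrix $X\in\mathbb{C}^{n\times m}$ with $AXA=A$, $XAX=X$, $(AX)^{\sim}=AX$, $(XA)^{\sim}=XA$, when it exists. A $\{1\}$-inverse of a matrix $M$ is any $M^{(1)}$ with $MM^{(1)}M=M$. *)

theory Defs
  imports "Jordan_Normal_Form.Schur_Decomposition" "Jordan_Normal_Form.DL_Rank"
begin

definition minkowski_metric :: "nat \<Rightarrow> complex mat" where
  "minkowski_metric k = mat k k (\<lambda>(i,j). if i = j then (if i = 0 then 1 else -1) else 0)"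

definition minkowski_adjoint :: "complex mat \<Rightarrow> complex mat" where
  "minkowski_adjoint A =
     minkowski_metric (dim_col A) * mat_adjoint A * minkowski_metric (dim_row A)"

definition is_minkowski_inverse :: "complex mat \<Rightarrow> complex mat \<Rightarrow> bool" where
  "is_minkowski_inverse A X \<longleftrightarrow>
     X \<in> carrier_mat (dim_col A) (dim_row A) \<and>
     A * X * A = A \<and> X * A * X = X \<and>
     minkowski_adjoint (A * X) = A * X \<and> minkowski_adjoint (X * A) = X * A"

definition minkowski_inverse :: "complex mat \<Rightarrow> complex mat" where
  "minkowski_inverse A = (THE X. is_minkowski_inverse A X)"

end

theory Submission
  imports Defs
begin


context vec_space
begin

lemma li_card_le_rank:
  assumes B: "B \<in> carrier_mat n b" and T: "T \<subseteq> span (set (cols B))" and li: "lin_indpt T"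
  shows "finite T" "card T \<le> rank B"
proof -
  let ?W = "span (set (cols B))"
  have cB: "set (cols B) \<subseteq> carrier_vec n" using B cols_dim by (metis carrier_matD(1))
  have sub: "VectorSpace.subspace class_ring ?W V" using span_is_subspace[OF cB] by simp
  have sm: "submodule class_ring ?W V" using span_is_submodule[OF cB] by simp
  have vs: "vectorspace class_ring (vs ?W)" using subspace_is_vs[OF sub] .
  have fd: "vectorspace.fin_dim class_ring (vs ?W)" using fin_dim_span_cols[OF B] .
  have Tc: "T \<subseteq> carrier (vs ?W)" using T by simp
  have li2: "\<not> module.lin_dep class_ring (vs ?W) T"
    using span_li_not_depend(2)[OF T sm] li by simp
  show "finite T" using vectorspace.li_le_dim(1)[OF vs fd Tc li2] .
  have "card T \<le> vectorspace.dim class_ring (vs ?W)" using vectorspace.li_le_dim(2)[OF vs fd Tc li2] .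
  then show "card T \<le> rank B" unfolding rank_def by simp
qed

lemma max_indep_cols:
  assumes A: "A \<in> carrier_mat n a"
  shows "\<exists>S. S \<subseteq> set (cols A) \<and> lin_indpt S \<and> card S = rank A \<and> finite S \<and> set (cols A) \<subseteq> span S"
proof -
  obtain S where max: "maximal S (\<lambda>T. T \<subseteq> set (cols A) \<and> lin_indpt T)" and "{} \<subseteq> S" "finite S"
    using maximal_exists_superset[of "set (cols A)" "(\<lambda>T. T \<subseteq> set (cols A) \<and> lin_indpt T)" "{}"]
    by (metis (no_types) List.finite_set empty_subsetI fin_dim finite_basis_exists subset_li_is_li vec_vs vectorspace.basis_def)
  have SA: "S \<subseteq> set (cols A)" and li: "lin_indpt S" using max unfolding maximal_def by auto
  have cA: "set (cols A) \<subseteq> carrier_vec n" using A cols_dim by (metis carrier_matD(1))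
  have "set (cols A) \<subseteq> span S"
  proof
    fix v assume v: "v \<in> set (cols A)"
    show "v \<in> span S"
    proof (rule ccontr)
      assume nv: "v \<notin> span S"
      have Sc: "S \<subseteq> carrier_vec n" using SA cA by auto
      have vS: "v \<notin> S" using nv in_own_span[OF Sc] by auto
      have "lin_indpt (S \<union> {v})"
        using lin_dep_iff_in_span[OF Sc li _ vS] v cA nv by auto
      moreover have "S \<union> {v} \<subseteq> set (cols A)" using SA v by auto
      ultimately have "S \<union> {v} = S" using max unfolding maximal_def by blast
      then show False using vS by auto
    qed
  qed
  then show ?thesis using SA li rank_card_indpt[OF A max] \<open>finite S\<close> by auto
qed

lemma col_in_span_iff:
  assumes A: "A \<in> carrier_mat n a" and B: "B \<in> carrier_mat n b"
  shows "(set (cols A) \<subseteq> span (set (cols B))) \<longleftrightarrow> (\<exists>U\<in>carrier_mat b a. A = B * U)"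
proof
  have cs: "span (set (cols B)) = {y\<in>carrier_vec n. \<exists>x\<in>carrier_vec b. B *\<^sub>v x = y}"
    using col_space_eq[OF B] B unfolding col_space_def by auto
  assume sub: "set (cols A) \<subseteq> span (set (cols B))"
  have "\<forall>j. \<exists>x. j < a \<longrightarrow> x \<in> carrier_vec b \<and> B *\<^sub>v x = col A j"
  proof (intro allI impI)
    fix j
    show "\<exists>x. j < a \<longrightarrow> x \<in> carrier_vec b \<and> B *\<^sub>v x = col A j"
    proof (cases "j < a")
      case True
      then have "col A j \<in> set (cols A)" using A by (simp add: cols_def)
      then show ?thesis using sub cs by auto
    qed auto
  qed
  then obtain f where f: "\<And>j. j < a \<Longrightarrow> f j \<in> carrier_vec b \<and> B *\<^sub>v f j = col A j" by metis
  define U where "U = mat_of_cols b (map f [0..<a])"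
  have U: "U \<in> carrier_mat b a" unfolding U_def using mat_of_cols_carrier(1)[of b "map f [0..<a]"] by simp
  have colU: "\<And>j. j < a \<Longrightarrow> col U j = f j" unfolding U_def using f by (simp add: col_mat_of_cols)
  have "A = B * U"
  proof (rule mat_col_eqI)
    show "dim_row A = dim_row (B * U)" "dim_col A = dim_col (B * U)" using A B U by auto
    fix j assume "j < dim_col (B * U)"
    then have j: "j < a" using U by simp
    show "col A j = col (B * U) j" using col_mult2[OF B U j] colU[OF j] f[OF j] by simp
  qed
  then show "\<exists>U\<in>carrier_mat b a. A = B * U" using U by blast
next
  have cs: "span (set (cols B)) = {y\<in>carrier_vec n. \<exists>x\<in>carrier_vec b. B *\<^sub>v x = y}"
    using col_space_eq[OF B] B unfolding col_space_def by auto
  assume "\<exists>U\<in>carrier_mat b a. A = B * U"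
  then obtain U where U: "U \<in> carrier_mat b a" and AU: "A = B * U" by blast
  show "set (cols A) \<subseteq> span (set (cols B))"
  proof
    fix v assume "v \<in> set (cols A)"
    then obtain j where j: "j < a" and v: "v = col A j" using A by (auto simp: cols_def)
    have "v = B *\<^sub>v col U j" using v AU col_mult2[OF B U j] by simp
    moreover have "col U j \<in> carrier_vec b" using U j by auto
    ultimately show "v \<in> span (set (cols B))" unfolding cs using B U by auto
  qed
qed

lemma rank_mono_col:
  assumes A: "A \<in> carrier_mat n a" and B: "B \<in> carrier_mat n b"
    and sub: "set (cols A) \<subseteq> span (set (cols B))"
  shows "rank A \<le> rank B"
proof -
  obtain S where S: "S \<subseteq> set (cols A)" "lin_indpt S" "card S = rank A"
    using max_indep_cols[OF A] by blast
  show ?thesis using li_card_le_rank(2)[OF B _ S(2)] S sub by auto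
qed

lemma rank_eq_col:
  assumes A: "A \<in> carrier_mat n a" and B: "B \<in> carrier_mat n b"
    and sub: "set (cols A) \<subseteq> span (set (cols B))" and le: "rank B \<le> rank A"
  shows "set (cols B) \<subseteq> span (set (cols A))"
proof -
  obtain S where S: "S \<subseteq> set (cols A)" "lin_indpt S" "card S = rank A" "finite S"
    "set (cols A) \<subseteq> span S"
    using max_indep_cols[OF A] by blast
  have cA: "set (cols A) \<subseteq> carrier_vec n" using A cols_dim by (metis carrier_matD(1))
  have cB: "set (cols B) \<subseteq> carrier_vec n" using B cols_dim by (metis carrier_matD(1))
  have Sc: "S \<subseteq> carrier_vec n" using S cA by auto
  have "set (cols B) \<subseteq> span S"
  proof
    fix v assume v: "v \<in> set (cols B)"
    show "v \<in> span S"
    proof (rule ccontr)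
      assume nv: "v \<notin> span S"
      have vS: "v \<notin> S" using nv in_own_span[OF Sc] by auto
      have li: "lin_indpt (S \<union> {v})"
        using lin_dep_iff_in_span[OF Sc S(2) _ vS] v cB nv by auto
      have "S \<union> {v} \<subseteq> span (set (cols B))"
        using S(1) sub v in_own_span[OF cB] by auto
      then have "card (S \<union> {v}) \<le> rank B" using li_card_le_rank(2)[OF B _ li] by auto
      moreover have "card (S \<union> {v}) = card S + 1" using vS S(4) by simp
      ultimately show False using S(3) le by simp
    qed
  qed
  also have "span S \<subseteq> span (set (cols A))" using span_is_monotone[OF S(1)] .
  finally show ?thesis .
qed

lemma rank_factor:
  assumes P: "P \<in> carrier_mat n k"
  shows "\<exists>C\<in>carrier_mat n (rank P). \<exists>R\<in>carrier_mat (rank P) k. P = C * R"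
proof -
  obtain S where S: "S \<subseteq> set (cols P)" "lin_indpt S" "card S = rank P" "finite S"
    "set (cols P) \<subseteq> span S"
    using max_indep_cols[OF P] by blast
  obtain xs where xs: "set xs = S" "distinct xs" using finite_distinct_list[OF S(4)] by blast
  have len: "length xs = rank P" using xs S(3) distinct_card by fastforce
  have cP: "set (cols P) \<subseteq> carrier_vec n" using P cols_dim by (metis carrier_matD(1))
  define C where "C = mat_of_cols n xs"
  have C: "C \<in> carrier_mat n (rank P)" unfolding C_def using len mat_of_cols_carrier(1)[of n xs] by simp
  have "cols C = xs" unfolding C_def using xs S(1) cP by (intro cols_mat_of_cols) auto
  then have "set (cols P) \<subseteq> span (set (cols C))" using S(5) xs by simp
  then show ?thesis using col_in_span_iff[OF P C] C by blast
qed

lemma rank_mult_le: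
  assumes C: "C \<in> carrier_mat n r" and R: "R \<in> carrier_mat r k"
  shows "rank (C * R) \<le> r"
proof -
  have CR: "C * R \<in> carrier_mat n k" using C R by simp
  have "set (cols (C * R)) \<subseteq> span (set (cols C))" using col_in_span_iff[OF CR C] R by blast
  then have "rank (C * R) \<le> rank C" using rank_mono_col[OF CR C] by simp
  also have "\<dots> \<le> r" using rank_le_nc[OF C] .
  finally show ?thesis .
qed

lemma rank_eq_factor:
  assumes A: "A \<in> carrier_mat n a" and B: "B \<in> carrier_mat n b"
    and U: "U \<in> carrier_mat b a" and AU: "A = B * U" and le: "rank B \<le> rank A"
  shows "\<exists>W\<in>carrier_mat a b. B = A * W"
proof -
  have "set (cols A) \<subseteq> span (set (cols B))" using col_in_span_iff[OF A B] U AU by blast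
  then have "set (cols B) \<subseteq> span (set (cols A))" using rank_eq_col[OF A B _ le] by blast
  then show ?thesis using col_in_span_iff[OF B A] by blast
qed

end


definition sg :: "nat \<Rightarrow> complex" where "sg i = (if i = 0 then 1 else -1)"

lemma sg_sq[simp]: "sg i * sg i = 1" unfolding sg_def by auto

lemma cnj_sg[simp]: "cnj (sg i) = sg i" unfolding sg_def by auto

lemma mm_carrier[simp]: "minkowski_metric k \<in> carrier_mat k k"
  unfolding minkowski_metric_def by simp

lemma mm_dims[simp]: "dim_row (minkowski_metric k) = k" "dim_col (minkowski_metric k) = k"
  unfolding minkowski_metric_def by simp_all

lemma mm_index: "i < k \<Longrightarrow> j < k \<Longrightarrow> minkowski_metric k $$ (i,j) = (if i = j then sg i else 0)"
  unfolding minkowski_metric_def sg_def by simp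

lemma diag_left:
  assumes P: "P \<in> carrier_mat k l"
  shows "minkowski_metric k * P = mat k l (\<lambda>(i,j). sg i * P $$ (i,j))"
proof (rule eq_matI)
  fix i j assume i: "i < dim_row (mat k l (\<lambda>(i,j). sg i * P $$ (i,j)))"
    and j: "j < dim_col (mat k l (\<lambda>(i,j). sg i * P $$ (i,j)))"
  then have i: "i < k" and j: "j < l" by auto
  have "(minkowski_metric k * P) $$ (i,j) = (\<Sum>t\<in>{0..<k}. minkowski_metric k $$ (i,t) * P $$ (t,j))"
    using i j P by (simp add: scalar_prod_def)
  also have "\<dots> = (\<Sum>t\<in>{0..<k}. (if t = i then sg i * P $$ (i,j) else 0))"
    using i by (intro sum.cong) (auto simp: mm_index)
  also have "\<dots> = sg i * P $$ (i,j)" using i by simp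
  finally show "(minkowski_metric k * P) $$ (i,j) = mat k l (\<lambda>(i,j). sg i * P $$ (i,j)) $$ (i,j)"
    using i j by simp
qed (use P in auto)

lemma diag_right:
  assumes P: "P \<in> carrier_mat k l"
  shows "P * minkowski_metric l = mat k l (\<lambda>(i,j). P $$ (i,j) * sg j)"
proof (rule eq_matI)
  fix i j assume i: "i < dim_row (mat k l (\<lambda>(i,j). P $$ (i,j) * sg j))"
    and j: "j < dim_col (mat k l (\<lambda>(i,j). P $$ (i,j) * sg j))"
  then have i: "i < k" and j: "j < l" by auto
  have "(P * minkowski_metric l) $$ (i,j) = (\<Sum>t\<in>{0..<l}. P $$ (i,t) * minkowski_metric l $$ (t,j))"
    using i j P by (simp add: scalar_prod_def)
  also have "\<dots> = (\<Sum>t\<in>{0..<l}. (if t = j then P $$ (i,j) * sg j else 0))"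
    using j by (intro sum.cong) (auto simp: mm_index)
  also have "\<dots> = P $$ (i,j) * sg j" using j by simp
  finally show "(P * minkowski_metric l) $$ (i,j) = mat k l (\<lambda>(i,j). P $$ (i,j) * sg j) $$ (i,j)"
    using i j by simp
qed (use P in auto)

lemma adj_carrier: "A \<in> carrier_mat m n \<Longrightarrow> mat_adjoint A \<in> carrier_mat n m"
  unfolding mat_adjoint_def by auto

lemma adj_entry: "A \<in> carrier_mat m n \<Longrightarrow> i < n \<Longrightarrow> j < m \<Longrightarrow> mat_adjoint A $$ (i,j) = cnj (A $$ (j,i))"
  unfolding mat_adjoint_def by (auto simp: mat_of_rows_index)

lemma madj_entry:
  assumes A: "A \<in> carrier_mat m n"
  shows "minkowski_adjoint A = mat n m (\<lambda>(i,j). sg i * sg j * cnj (A $$ (j,i)))"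
proof -
  have "minkowski_adjoint A = minkowski_metric n * mat_adjoint A * minkowski_metric m"
    unfolding minkowski_adjoint_def using A by simp
  also have "\<dots> = mat n m (\<lambda>(i,j). sg i * mat_adjoint A $$ (i,j)) * minkowski_metric m"
    using diag_left[OF adj_carrier[OF A]] by simp
  also have "\<dots> = mat n m (\<lambda>(i,j). sg i * mat_adjoint A $$ (i,j) * sg j)"
    by (subst diag_right) auto
  also have "\<dots> = mat n m (\<lambda>(i,j). sg i * sg j * cnj (A $$ (j,i)))"
    using A by (auto intro!: eq_matI simp: adj_entry)
  finally show ?thesis .
qed

lemma madj_carrier[simp]: "A \<in> carrier_mat m n \<Longrightarrow> minkowski_adjoint A \<in> carrier_mat n m"
  by (simp add: madj_entry)

lemma madj_dims[simp]: "dim_row (minkowski_adjoint A) = dim_col A" "dim_col (minkowski_adjoint A) = dim_row A"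
  by (simp_all add: minkowski_adjoint_def minkowski_metric_def)

lemma madj_madj[simp]: "minkowski_adjoint (minkowski_adjoint A) = A"
proof -
  have A: "A \<in> carrier_mat (dim_row A) (dim_col A)" by auto
  have M: "minkowski_adjoint A \<in> carrier_mat (dim_col A) (dim_row A)" using madj_carrier[OF A] .
  show ?thesis
    unfolding madj_entry[OF M]
    by (rule eq_matI) (auto simp: madj_entry[OF A] algebra_simps)
qed

lemma madj_mult:
  assumes A: "A \<in> carrier_mat m k" and B: "B \<in> carrier_mat k n"
  shows "minkowski_adjoint (A * B) = minkowski_adjoint B * minkowski_adjoint A"
proof (rule eq_matI)
  have AB: "A * B \<in> carrier_mat m n" using A B by simp
  fix i j assume "i < dim_row (minkowski_adjoint B * minkowski_adjoint A)"
    "j < dim_col (minkowski_adjoint B * minkowski_adjoint A)"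
  then have i: "i < n" and j: "j < m" using A B by auto
  have "minkowski_adjoint (A * B) $$ (i,j) = sg i * sg j * cnj (\<Sum>t\<in>{0..<k}. A $$ (j,t) * B $$ (t,i))"
    using i j A B by (simp add: madj_entry[OF AB] scalar_prod_def)
  also have "\<dots> = (\<Sum>t\<in>{0..<k}. (sg i * sg t * cnj (B $$ (t,i))) * (sg t * sg j * cnj (A $$ (j,t))))"
    by (auto simp: cnj_sum sum_distrib_left intro!: sum.cong)
  also have "\<dots> = (minkowski_adjoint B * minkowski_adjoint A) $$ (i,j)"
    using i j A B by (simp add: madj_entry[OF A] madj_entry[OF B] scalar_prod_def)
  finally show "(minkowski_adjoint (A * B)) $$ (i,j) = (minkowski_adjoint B * minkowski_adjoint A) $$ (i,j)" .
qed (use A B in auto)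



lemma massoc: "dim_col A = dim_row B \<Longrightarrow> dim_col B = dim_row C \<Longrightarrow> A * B * C = A * (B * C)"
  by (rule assoc_mult_mat[of A "dim_row A" "dim_col A" B "dim_col B" C "dim_col C"]) auto

lemma madj_mult': "dim_col A = dim_row B \<Longrightarrow> minkowski_adjoint (A * B) = minkowski_adjoint B * minkowski_adjoint A"
  by (rule madj_mult[of A "dim_row A" "dim_col A" B "dim_col B"]) auto

lemma mi_unique:
  assumes X: "is_minkowski_inverse A X" and Y: "is_minkowski_inverse A Y"
  shows "X = Y"
proof -
  let ?d = minkowski_adjoint
  define m n where "m = dim_row A" and "n = dim_col A"
  have dX: "dim_row X = n" "dim_col X = m" and dY: "dim_row Y = n" "dim_col Y = m"
    using X Y unfolding is_minkowski_inverse_def m_def n_def by auto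
  have x1: "A * X * A = A" and x2: "X * A * X = X" and x3: "?d (A * X) = A * X" and x4: "?d (X * A) = X * A"
    using X unfolding is_minkowski_inverse_def by auto
  have y1: "A * Y * A = A" and y2: "Y * A * Y = Y" and y3: "?d (A * Y) = A * Y" and y4: "?d (Y * A) = Y * A"
    using Y unfolding is_minkowski_inverse_def by auto
  note dims = dX dY m_def[symmetric] n_def[symmetric]
  have x3': "?d X * ?d A = A * X" using x3 madj_mult'[of A X] dims by simp
  have x4': "?d A * ?d X = X * A" using x4 madj_mult'[of X A] dims by simp
  have y3': "?d Y * ?d A = A * Y" using y3 madj_mult'[of A Y] dims by simp
  have y4': "?d A * ?d Y = Y * A" using y4 madj_mult'[of Y A] dims by simp
  have eA1: "?d A = ?d A * (A * Y)"
  proof -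
    have "?d A = ?d (A * Y * A)" using y1 by simp
    also have "\<dots> = ?d A * ?d Y * ?d A" using madj_mult'[of "A*Y" A] madj_mult'[of A Y] dims by (simp add: massoc)
    also have "\<dots> = ?d A * (A * Y)" using massoc[of "?d A" "?d Y" "?d A"] y3' dims by simp
    finally show ?thesis .
  qed
  have eA2: "?d A = (X * A) * ?d A"
  proof -
    have "?d A = ?d (A * X * A)" using x1 by simp
    also have "\<dots> = ?d A * ?d X * ?d A" using madj_mult'[of "A*X" A] madj_mult'[of A X] dims by (simp add: massoc)
    also have "\<dots> = (X * A) * ?d A" using x4' by simp
    finally show ?thesis .
  qed
  have "X = X * (A * X)" using x2 massoc[of X A X] dims by simp
  also have "\<dots> = X * (?d X * ?d A)" using x3' by simp
  also have "\<dots> = X * (?d X * (?d A * (A * Y)))" using eA1 by simp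
  also have "\<dots> = X * ((?d X * ?d A) * (A * Y))" using massoc[of "?d X" "?d A" "A * Y"] dims by simp
  also have "\<dots> = X * ((A * X) * (A * Y))" using x3' by simp
  also have "\<dots> = (X * A * X) * A * Y" using massoc dims by (simp add: massoc)
  also have "\<dots> = X * A * Y" using x2 by simp
  finally have eX: "X = X * A * Y" .
  have "Y = (Y * A) * Y" using y2 by simp
  also have "\<dots> = (?d A * ?d Y) * Y" using y4' by simp
  also have "\<dots> = ((X * A) * ?d A * ?d Y) * Y" using eA2 by simp
  also have "\<dots> = (X * A) * (?d A * ?d Y) * Y" using massoc[of "X*A" "?d A" "?d Y"] dims by simp
  also have "\<dots> = (X * A) * (Y * A) * Y" using y4' by simp
  also have "\<dots> = X * A * (Y * A * Y)" using dims by (simp add: massoc)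
  also have "\<dots> = X * A * Y" using y2 by simp
  finally show ?thesis using eX by simp
qed



lemma rank_adj_le:
  assumes P: "P \<in> carrier_mat k l"
  shows "vec_space.rank l (minkowski_adjoint P) \<le> vec_space.rank k P"
proof -
  obtain C R where C: "C \<in> carrier_mat k (vec_space.rank k P)" and R: "R \<in> carrier_mat (vec_space.rank k P) l"
    and PCR: "P = C * R"
    using vec_space.rank_factor[OF P] by blast
  have "minkowski_adjoint P = minkowski_adjoint R * minkowski_adjoint C"
    using PCR madj_mult[OF C R] by simp
  moreover have "vec_space.rank l (minkowski_adjoint R * minkowski_adjoint C) \<le> vec_space.rank k P"
    by (rule vec_space.rank_mult_le) (use C R in auto)
  ultimately show ?thesis by simp
qed

lemma mi_exists:
  assumes A: "A \<in> carrier_mat m n"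
    and rk: "vec_space.rank n (minkowski_adjoint A * A * minkowski_adjoint A) = vec_space.rank m A"
  shows "\<exists>X. is_minkowski_inverse A X"
proof -
  let ?d = minkowski_adjoint
  let ?M = "?d A"
  let ?K = "?M * A * ?M"
  let ?L = "A * ?M * A"
  have dA[simp]: "dim_row A = m" "dim_col A = n" using A by auto
  have M: "?M \<in> carrier_mat n m" using A by simp
  have K: "?K \<in> carrier_mat n m" by (rule carrier_matI) simp_all
  have L: "?L \<in> carrier_mat m n" by (rule carrier_matI) simp_all
  have r1: "vec_space.rank n ?M \<le> vec_space.rank m A" using rank_adj_le[OF A] .
  have "\<exists>U\<in>carrier_mat m m. ?M = ?K * U"
    by (rule vec_space.rank_eq_factor[OF K M, of "A * ?M"]) (use r1 rk in \<open>auto simp: massoc\<close>)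
  then obtain U where U: "U \<in> carrier_mat m m" and MKU: "?M = ?K * U" by blast
  have KL: "?d ?K = ?L"
    using madj_mult'[of "?M * A" ?M] madj_mult'[of ?M A] by (simp add: massoc)
  have "vec_space.rank m A = vec_space.rank n (?d ?L)" using rk KL[symmetric] by simp
  also have "\<dots> \<le> vec_space.rank m ?L" using rank_adj_le[OF L] .
  finally have r2: "vec_space.rank m A \<le> vec_space.rank m ?L" .
  have "\<exists>W\<in>carrier_mat n n. A = ?L * W"
    by (rule vec_space.rank_eq_factor[OF L A, of "?M * A"]) (use r2 in \<open>auto simp: massoc\<close>)
  then obtain W where W: "W \<in> carrier_mat n n" and ALW: "A = ?L * W" by blast
  define V where "V = ?d W"
  have V: "V \<in> carrier_mat n n" using W unfolding V_def by simp
  have MVK: "?M = V * ?K"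
  proof -
    have "?M = ?d (?L * W)" using ALW by simp
    also have "\<dots> = V * ?K" unfolding V_def using madj_mult[OF L W] KL by (metis madj_madj)
    finally show ?thesis .
  qed
  have dU[simp]: "dim_row U = m" "dim_col U = m" using U by auto
  have dV[simp]: "dim_row V = n" "dim_col V = n" using V by auto
  have dW[simp]: "dim_row (?d U) = m" "dim_col (?d U) = m" "dim_row (?d V) = n" "dim_col (?d V) = n"
    by simp_all
  have KU: "?M * (A * (?M * U)) = ?M" using MKU by (simp add: massoc)
  have VK: "V * (?M * (A * ?M)) = ?M" using MVK by (simp add: massoc)
  have AU: "A = ?d U * (A * (?M * A))"
  proof -
    have "A = ?d ?M" by simp
    also have "\<dots> = ?d (?K * U)" using MKU by simp
    also have "\<dots> = ?d U * ?L" using madj_mult'[of ?K U] KL by simp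
    finally show ?thesis by (simp add: massoc)
  qed
  have AV: "A = A * (?M * (A * ?d V))"
  proof -
    have "A = ?d ?M" by simp
    also have "\<dots> = ?d (V * ?K)" using MVK by simp
    also have "\<dots> = ?L * ?d V" using madj_mult'[of V ?K] KL by simp
    finally show ?thesis by (simp add: massoc)
  qed
  have KU': "?M * (A * (?M * (U * Z))) = ?M * Z" if "dim_row Z = m" for Z
  proof -
    have "?M * (A * (?M * (U * Z))) = (?M * (A * (?M * U))) * Z" using that by (simp add: massoc)
    then show ?thesis using KU by simp
  qed
  have VK': "V * (?M * (A * (?M * Z))) = ?M * Z" if "dim_row Z = m" for Z
  proof -
    have "V * (?M * (A * (?M * Z))) = (V * (?M * (A * ?M))) * Z" using that by (simp add: massoc)
    then show ?thesis using VK by simp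
  qed
  define X where "X = ?M * U"
  have X: "X \<in> carrier_mat n m" unfolding X_def by (rule carrier_matI) simp_all
  have XV: "X = V * ?M"
  proof -
    have "X = V * (?M * (A * (?M * U)))" unfolding X_def using VK'[of U] by simp
    also have "\<dots> = V * ?M" using KU by simp
    finally show ?thesis .
  qed
  have e1: "A * X * A = A"
  proof -
    have "A * X * A = A * (?M * (U * A))" unfolding X_def by (simp add: massoc)
    also have "\<dots> = (?d U * (A * (?M * A))) * (?M * (U * A))" by (simp only: AU[symmetric])
    also have "\<dots> = ?d U * (A * (?M * (A * (?M * (U * A)))))" by (simp add: massoc)
    also have "\<dots> = ?d U * (A * (?M * A))" using KU'[of A] by simp
    also have "\<dots> = A" using AU by simp
    finally show ?thesis .
  qed
  have e2: "X * A * X = X"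
  proof -
    have "X * A * X = V * (?M * (A * (?M * U)))" unfolding X_def using XV[unfolded X_def]
      by (simp add: massoc)
    also have "\<dots> = V * ?M" using KU by simp
    finally show ?thesis using XV by simp
  qed
  have AX: "A * X = ?d U * (A * ?M)"
  proof -
    have "A * X = A * (?M * U)" unfolding X_def by simp
    also have "\<dots> = (?d U * (A * (?M * A))) * (?M * U)" by (simp only: AU[symmetric])
    also have "\<dots> = ?d U * (A * (?M * (A * (?M * U))))" by (simp add: massoc)
    also have "\<dots> = ?d U * (A * ?M)" using KU by simp
    finally show ?thesis .
  qed
  have e3: "?d (A * X) = A * X"
  proof -
    have "?d (A * X) = ?d X * ?M" using madj_mult'[of A X] X by simp
    also have "\<dots> = ?d U * A * ?M" unfolding X_def using madj_mult'[of ?M U] by simp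
    finally show ?thesis using AX by (simp add: massoc)
  qed
  have XA: "X * A = ?M * (A * ?d V)"
  proof -
    have "X * A = V * (?M * A)" using XV by (simp add: massoc)
    also have "\<dots> = V * (?M * (A * (?M * (A * ?d V))))" by (simp only: AV[symmetric])
    also have "\<dots> = ?M * (A * ?d V)" using VK'[of "A * ?d V"] by simp
    finally show ?thesis .
  qed
  have e4: "?d (X * A) = X * A"
  proof -
    have "?d (X * A) = ?M * ?d X" using madj_mult'[of X A] X by simp
    also have "\<dots> = ?M * (A * ?d V)" using XV madj_mult'[of V ?M] by simp
    finally show ?thesis using XA by simp
  qed
  have "is_minkowski_inverse A X"
    unfolding is_minkowski_inverse_def using X e1 e2 e3 e4 by simp
  then show ?thesis by blast
qed



lemma part1_fwd:
  assumes X: "is_minkowski_inverse A X"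
  shows "X = minkowski_adjoint A * (minkowski_adjoint X * X)"
    "X = (X * minkowski_adjoint X) * minkowski_adjoint A"
proof -
  let ?d = minkowski_adjoint
  have dX: "dim_row X = dim_col A" "dim_col X = dim_row A"
    using X unfolding is_minkowski_inverse_def by auto
  have x2: "X * A * X = X" and x3: "?d (A * X) = A * X" and x4: "?d (X * A) = X * A"
    using X unfolding is_minkowski_inverse_def by auto
  have "X = (X * A) * X" using x2 by simp
  also have "\<dots> = ?d (X * A) * X" using x4 by simp
  also have "\<dots> = ?d A * (?d X * X)" using madj_mult'[of X A] dX by (simp add: massoc)
  finally show "X = ?d A * (?d X * X)" .
  have "X = X * (A * X)" using x2 dX by (simp add: massoc)
  also have "\<dots> = X * ?d (A * X)" using x3 by simp
  also have "\<dots> = (X * ?d X) * ?d A" using madj_mult'[of A X] dX by (simp add: massoc)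
  finally show "X = (X * ?d X) * ?d A" .
qed

lemma part1_bwd:
  assumes A: "A \<in> carrier_mat m n" and X: "X \<in> carrier_mat n m"
    and B: "B \<in> carrier_mat m m" and C: "C \<in> carrier_mat n n"
    and h1: "A * X * A = A" and hB: "X = minkowski_adjoint A * B" and hC: "X = C * minkowski_adjoint A"
  shows "is_minkowski_inverse A X"
proof -
  let ?d = minkowski_adjoint
  have [simp]: "dim_row A = m" "dim_col A = n" "dim_row X = n" "dim_col X = m"
    "dim_row B = m" "dim_col B = m" "dim_row C = n" "dim_col C = n" using A X B C by auto
  have dA: "?d A = ?d A * (?d X * ?d A)"
  proof -
    have "?d A = ?d (A * X * A)" using h1 by simp
    also have "\<dots> = ?d A * (?d X * ?d A)" using madj_mult'[of "A*X" A] madj_mult'[of A X] by (simp add: massoc)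
    finally show ?thesis .
  qed
  have AXd: "?d (A * X) = ?d X * ?d A" using madj_mult'[of A X] by simp
  have XAd: "?d (X * A) = ?d A * ?d X" using madj_mult'[of X A] by simp
  have e_AX: "A * X = A * X * ?d (A * X)"
  proof -
    have "A * X = A * (C * ?d A)" using hC by simp
    also have "\<dots> = A * (C * (?d A * (?d X * ?d A)))" using dA by simp
    also have "\<dots> = A * (C * ?d A) * (?d X * ?d A)" by (simp add: massoc)
    also have "\<dots> = A * X * ?d (A * X)" using hC AXd by simp
    finally show ?thesis .
  qed
  have e_XA: "X * A = ?d (X * A) * (X * A)"
  proof -
    have "X * A = ?d A * (B * A)" using hB by (simp add: massoc)
    also have "\<dots> = (?d A * (?d X * ?d A)) * (B * A)" using dA by simp
    also have "\<dots> = (?d A * ?d X) * (?d A * B * A)" by (simp add: massoc)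
    also have "\<dots> = ?d (X * A) * (X * A)" using hB XAd by simp
    finally show ?thesis .
  qed
  have e3: "?d (A * X) = A * X"
  proof -
    have "?d (A * X) = ?d (A * X * ?d (A * X))" using e_AX by simp
    also have "\<dots> = ?d (?d (A * X)) * ?d (A * X)" using madj_mult'[of "A * X" "?d (A * X)"] by simp
    also have "\<dots> = A * X" using e_AX by simp
    finally show ?thesis .
  qed
  have e4: "?d (X * A) = X * A"
  proof -
    have "?d (X * A) = ?d (?d (X * A) * (X * A))" using e_XA by simp
    also have "\<dots> = ?d (X * A) * ?d (?d (X * A))" using madj_mult'[of "?d (X * A)" "X * A"] by simp
    also have "\<dots> = X * A" using e_XA by simp
    finally show ?thesis .
  qed
  have e2: "X * A * X = X"
  proof -
    have "X = C * ?d A" using hC .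
    also have "\<dots> = C * (?d A * (?d X * ?d A))" using dA by simp
    also have "\<dots> = (C * ?d A) * ?d (A * X)" using AXd by (simp add: massoc)
    also have "\<dots> = X * (A * X)" using hC e3 by simp
    finally show ?thesis by (simp add: massoc)
  qed
  show ?thesis unfolding is_minkowski_inverse_def using X h1 e2 e3 e4 by simp
qed

theorem theorem5p7:
  fixes A X :: "complex mat" and m n :: nat
  assumes "0 < m" and "0 < n"
    and A: "A \<in> carrier_mat m n" and X: "X \<in> carrier_mat n m"
    and rk: "vec_space.rank n (minkowski_adjoint A * A * minkowski_adjoint A) = vec_space.rank m A"
  shows "(X = minkowski_inverse A \<longleftrightarrow>
           (\<exists>B \<in> carrier_mat m m. \<exists>C \<in> carrier_mat n n.
              A * X * A = A \<and> X = minkowski_adjoint A * B \<and> X = C * minkowski_adjoint A))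
       \<and> (\<forall>G \<in> carrier_mat m n.
            minkowski_adjoint A * G * minkowski_adjoint A = minkowski_adjoint A \<longrightarrow>
            (\<forall>Y \<in> carrier_mat m m. \<forall>Z \<in> carrier_mat n n.
              (let B = G * minkowski_inverse A + (1\<^sub>m m - G * minkowski_adjoint A) * Y;
                   C = minkowski_inverse A * G + Z * (1\<^sub>m n - minkowski_adjoint A * G)
               in A * minkowski_inverse A * A = A \<and>
                  minkowski_inverse A = minkowski_adjoint A * B \<and>
                  minkowski_inverse A = C * minkowski_adjoint A)))"
proof -
  let ?d = minkowski_adjoint
  let ?Am = "minkowski_inverse A"
  obtain X0 where X0: "is_minkowski_inverse A X0" using mi_exists[OF A rk] by blast
  have uq: "\<exists>!Y. is_minkowski_inverse A Y" using X0 mi_unique by blast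
  have Am: "is_minkowski_inverse A ?Am"
    unfolding minkowski_inverse_def using theI'[OF uq] .
  have [simp]: "dim_row A = m" "dim_col A = n" using A by auto
  have AmC: "?Am \<in> carrier_mat n m" using Am unfolding is_minkowski_inverse_def by simp
  have [simp]: "dim_row ?Am = n" "dim_col ?Am = m" using AmC by auto
  have Am1: "A * ?Am * A = A" using Am unfolding is_minkowski_inverse_def by simp
  note f = part1_fwd[OF Am]
  have P1: "(X = ?Am \<longleftrightarrow>
           (\<exists>B \<in> carrier_mat m m. \<exists>C \<in> carrier_mat n n.
              A * X * A = A \<and> X = ?d A * B \<and> X = C * ?d A))"
  proof
    assume "X = ?Am"
    moreover have "?d ?Am * ?Am \<in> carrier_mat m m" "?Am * ?d ?Am \<in> carrier_mat n n"
      by (rule carrier_matI; simp)+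
    ultimately show "\<exists>B \<in> carrier_mat m m. \<exists>C \<in> carrier_mat n n.
              A * X * A = A \<and> X = ?d A * B \<and> X = C * ?d A"
      using f Am1 by blast
  next
    assume "\<exists>B \<in> carrier_mat m m. \<exists>C \<in> carrier_mat n n.
              A * X * A = A \<and> X = ?d A * B \<and> X = C * ?d A"
    then obtain B C where "B \<in> carrier_mat m m" "C \<in> carrier_mat n n"
      "A * X * A = A" "X = ?d A * B" "X = C * ?d A" by blast
    then have "is_minkowski_inverse A X" using part1_bwd[OF A X] by blast
    then show "X = ?Am" using mi_unique[OF _ Am] by blast
  qed
  have P2: "?d A * (G * ?Am + (1\<^sub>m m - G * ?d A) * Y) = ?Am \<and>
            (?Am * G + Z * (1\<^sub>m n - ?d A * G)) * ?d A = ?Am"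
    if G: "G \<in> carrier_mat m n" and hG: "?d A * G * ?d A = ?d A"
      and Y: "Y \<in> carrier_mat m m" and Z: "Z \<in> carrier_mat n n" for G Y Z
  proof -
    have D: "?d A \<in> carrier_mat n m" using A by simp
    have [simp]: "dim_row G = m" "dim_col G = n" "dim_row Y = m" "dim_col Y = m"
      "dim_row Z = n" "dim_col Z = n" using G Y Z by auto
    have GAm: "G * ?Am \<in> carrier_mat m m" by (rule carrier_matI) simp_all
    have IGD: "1\<^sub>m m - G * ?d A \<in> carrier_mat m m" by (rule carrier_matI) simp_all
    have IDG: "1\<^sub>m n - ?d A * G \<in> carrier_mat n n" by (rule carrier_matI) simp_all
    have GD: "G * ?d A \<in> carrier_mat m m" by (rule carrier_matI) simp_all
    have DG: "?d A * G \<in> carrier_mat n n" by (rule carrier_matI) simp_all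
    have AmG: "?Am * G \<in> carrier_mat n n" by (rule carrier_matI) simp_all
    have b0: "?d A * (1\<^sub>m m - G * ?d A) = 0\<^sub>m n m"
    proof -
      have "?d A * (1\<^sub>m m - G * ?d A) = ?d A * 1\<^sub>m m - ?d A * (G * ?d A)"
        using mult_minus_distrib_mat[OF D one_carrier_mat GD] .
      also have "\<dots> = ?d A - ?d A" using hG by (simp add: massoc)
      also have "\<dots> = 0\<^sub>m n m" using D by simp
      finally show ?thesis .
    qed
    have c0: "(1\<^sub>m n - ?d A * G) * ?d A = 0\<^sub>m n m"
    proof -
      have "(1\<^sub>m n - ?d A * G) * ?d A = 1\<^sub>m n * ?d A - ?d A * G * ?d A"
        using minus_mult_distrib_mat[OF one_carrier_mat DG D] .
      also have "\<dots> = ?d A - ?d A" using hG by simp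
      also have "\<dots> = 0\<^sub>m n m" using D by simp
      finally show ?thesis .
    qed
    have "?d A * (G * ?Am + (1\<^sub>m m - G * ?d A) * Y) = ?d A * (G * ?Am) + ?d A * ((1\<^sub>m m - G * ?d A) * Y)"
      using mult_add_distrib_mat[OF D GAm mult_carrier_mat[OF IGD Y]] .
    also have "?d A * ((1\<^sub>m m - G * ?d A) * Y) = 0\<^sub>m n m"
      using b0 by (simp add: massoc[symmetric])
    also have "?d A * (G * ?Am) = ?Am"
    proof -
      have "?d A * (G * ?Am) = ?d A * (G * (?d A * (?d ?Am * ?Am)))" using f(1) by simp
      also have "\<dots> = (?d A * G * ?d A) * (?d ?Am * ?Am)" by (simp add: massoc)
      also have "\<dots> = ?Am" using hG f(1) by simp
      finally show ?thesis .
    qed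
    also have "?Am + 0\<^sub>m n m = ?Am" using AmC by simp
    finally have r1: "?d A * (G * ?Am + (1\<^sub>m m - G * ?d A) * Y) = ?Am" .
    have "(?Am * G + Z * (1\<^sub>m n - ?d A * G)) * ?d A = ?Am * G * ?d A + Z * (1\<^sub>m n - ?d A * G) * ?d A"
      using add_mult_distrib_mat[OF AmG mult_carrier_mat[OF Z IDG] D] .
    also have "Z * (1\<^sub>m n - ?d A * G) * ?d A = 0\<^sub>m n m"
      using c0 by (simp add: massoc)
    also have "?Am * G * ?d A = ?Am"
    proof -
      have "?Am * G * ?d A = ((?Am * ?d ?Am) * ?d A) * G * ?d A" using f(2) by simp
      also have "\<dots> = (?Am * ?d ?Am) * (?d A * G * ?d A)" by (simp add: massoc)
      also have "\<dots> = ?Am" using hG f(2) by simp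
      finally show ?thesis .
    qed
    also have "?Am + 0\<^sub>m n m = ?Am" using AmC by simp
    finally show ?thesis using r1 by simp
  qed
  show ?thesis using P1 P2 Am1 by (simp add: Let_def)
qed


end
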